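(* Let $F$ be a non-archimedean local field of any characteristic. Then every element of $K=Sp_4(\mathcal{O})$ is a product $k_1k_2k_3\cdots k_{60}$ with $k_{2m-1}\in K_1$ and $k_{2m}\in K_2$ for $1\leq m\leq 30$; that is, $K=(K_1K_2)^{30}$.
   Context: $\mathcal{O}$ is the ring of integers of $F$. $Sp_4$ is defined by $\{g:{}^tgJg=J\}$ with $J$ the $4\times4$ matrix having $J_{14}=J_{23}=1$, $J_{32}=J_{41}=-1$, other entries $0$. With $Q=\begin{pmatrix}0&1\\1&0\end{pmatrix}$, $K_1=\Big\{\begin{pmatrix}A&0\\0&Q\,{}^tA^{-1}Q\end{pmatrix}:A\in GL_2(\mathcal{O})\Big\}$ and $K_2=\Big\{\begin{pmatrix}1&0&0\\0&B&0\\0&0&1\end{pmatrix}:B\in SL_2(\mathcal{O})\Big\}$ (block sizes $1,2,1$), both subgroups of $K$. *)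

theory Defs
  imports "Jordan_Normal_Form.Matrix" "Jordan_Normal_Form.Determinant"
begin

text \<open>A normalized discrete valuation on the field 'a; the value at 0 is irrelevant
  (conceptually +infinity) and is never used.\<close>
definition discrete_valuation :: "('a::field \<Rightarrow> int) \<Rightarrow> bool" where
  "discrete_valuation v \<longleftrightarrow>
     (\<forall>x y. x \<noteq> 0 \<longrightarrow> y \<noteq> 0 \<longrightarrow> v (x * y) = v x + v y) \<and>
     (\<forall>x y. x \<noteq> 0 \<longrightarrow> y \<noteq> 0 \<longrightarrow> x + y \<noteq> 0 \<longrightarrow> min (v x) (v y) \<le> v (x + y)) \<and>
     (\<exists>p. p \<noteq> 0 \<and> v p = 1)"

definition val_ge :: "('a::field \<Rightarrow> int) \<Rightarrow> int \<Rightarrow> 'a \<Rightarrow> bool" where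
  "val_ge v n x \<longleftrightarrow> x = 0 \<or> n \<le> v x"

definition val_ring :: "('a::field \<Rightarrow> int) \<Rightarrow> 'a set" where
  "val_ring v = {x. val_ge v 0 x}"

definition val_ideal :: "('a::field \<Rightarrow> int) \<Rightarrow> 'a set" where
  "val_ideal v = {x. val_ge v 1 x}"

definition val_cauchy :: "('a::field \<Rightarrow> int) \<Rightarrow> (nat \<Rightarrow> 'a) \<Rightarrow> bool" where
  "val_cauchy v s \<longleftrightarrow> (\<forall>N. \<exists>M. \<forall>m\<ge>M. \<forall>n\<ge>M. val_ge v N (s m - s n))"

definition val_converges :: "('a::field \<Rightarrow> int) \<Rightarrow> (nat \<Rightarrow> 'a) \<Rightarrow> 'a \<Rightarrow> bool" where
  "val_converges v s L \<longleftrightarrow> (\<forall>N. \<exists>M. \<forall>n\<ge>M. val_ge v N (s n - L))"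

text \<open>The residue field O/P as the quotient of O by congruence mod P.\<close>
definition residue_rel :: "('a::field \<Rightarrow> int) \<Rightarrow> ('a \<times> 'a) set" where
  "residue_rel v = {(x, y). x \<in> val_ring v \<and> y \<in> val_ring v \<and> x - y \<in> val_ideal v}"

definition nonarch_local_field :: "('a::field \<Rightarrow> int) \<Rightarrow> bool" where
  "nonarch_local_field v \<longleftrightarrow>
     discrete_valuation v \<and>
     (\<forall>s. val_cauchy v s \<longrightarrow> (\<exists>L. val_converges v s L)) \<and>
     finite (val_ring v // residue_rel v)"

definition int_mat :: "('a::field \<Rightarrow> int) \<Rightarrow> nat \<Rightarrow> 'a mat set" where
  "int_mat v n = {A. A \<in> carrier_mat n n \<and> (\<forall>i<n. \<forall>j<n. A $$ (i, j) \<in> val_ring v)}"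

text \<open>J with J14 = J23 = 1, J32 = J41 = -1 (0-based indices below).\<close>
definition Jmat :: "'a::field mat" where
  "Jmat = mat 4 4 (\<lambda>(i, j). if (i, j) = (0, 3) \<or> (i, j) = (1, 2) then 1
                            else if (i, j) = (2, 1) \<or> (i, j) = (3, 0) then -1 else 0)"

definition Qmat :: "'a::field mat" where
  "Qmat = mat 2 2 (\<lambda>(i, j). if i \<noteq> j then 1 else 0)"

definition Sp4_O :: "('a::field \<Rightarrow> int) \<Rightarrow> 'a mat set" where
  "Sp4_O v = {g. g \<in> int_mat v 4 \<and> transpose_mat g * Jmat * g = Jmat}"

definition GL2_O :: "('a::field \<Rightarrow> int) \<Rightarrow> 'a mat set" where
  "GL2_O v = {A. A \<in> int_mat v 2 \<and> (\<exists>B \<in> int_mat v 2. A * B = 1\<^sub>m 2 \<and> B * A = 1\<^sub>m 2)}"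

definition SL2_O :: "('a::field \<Rightarrow> int) \<Rightarrow> 'a mat set" where
  "SL2_O v = {B. B \<in> int_mat v 2 \<and> det B = 1}"

text \<open>K1: block diagonal diag(A, Q (tA)^(-1) Q) with A in GL_2(O); the lower block D is
  characterised by Q D Q being the inverse of tA.\<close>
definition K1 :: "('a::field \<Rightarrow> int) \<Rightarrow> 'a mat set" where
  "K1 v = {four_block_mat A (0\<^sub>m 2 2) (0\<^sub>m 2 2) D | A D.
             A \<in> GL2_O v \<and> D \<in> carrier_mat 2 2 \<and>
             (Qmat * D * Qmat) * transpose_mat A = 1\<^sub>m 2 \<and>
             transpose_mat A * (Qmat * D * Qmat) = 1\<^sub>m 2}"

text \<open>K2: diag(1, B, 1) with B in SL_2(O) (block sizes 1,2,1).\<close>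
definition embed_mid :: "'a::field mat \<Rightarrow> 'a mat" where
  "embed_mid B = mat 4 4 (\<lambda>(i, j).
      if (i = 0 \<and> j = 0) \<or> (i = 3 \<and> j = 3) then 1
      else if 1 \<le> i \<and> i \<le> 2 \<and> 1 \<le> j \<and> j \<le> 2 then B $$ (i - 1, j - 1) else 0)"

definition K2 :: "('a::field \<Rightarrow> int) \<Rightarrow> 'a mat set" where
  "K2 v = embed_mid ` SL2_O v"

end

theory Submission
  imports Defs
begin

locale dv = fixes v :: "'a::field \<Rightarrow> int" assumes dv: "discrete_valuation v"
begin

abbreviation "Ov \<equiv> val_ring v"
abbreviation "Pv \<equiv> val_ideal v"

lemma vmult: "x \<noteq> 0 \<Longrightarrow> y \<noteq> 0 \<Longrightarrow> v (x * y) = v x + v y"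
  using dv unfolding discrete_valuation_def by blast
lemma vadd: "x \<noteq> 0 \<Longrightarrow> y \<noteq> 0 \<Longrightarrow> x + y \<noteq> 0 \<Longrightarrow> min (v x) (v y) \<le> v (x + y)"
  using dv unfolding discrete_valuation_def by blast
lemma v1: "v 1 = 0" using vmult[of 1 1] by simp
lemma vm1: "v (-1) = 0" using vmult[of "-1" "-1"] v1 by simp
lemma vneg: "x \<noteq> 0 \<Longrightarrow> v (-x) = v x" using vmult[of "-1" x] vm1 by simp
lemma vinv: "x \<noteq> 0 \<Longrightarrow> v (inverse x) = - v x" using vmult[of x "inverse x"] v1 by simp

lemma O_iff: "x \<in> Ov \<longleftrightarrow> x = 0 \<or> 0 \<le> v x" by (simp add: val_ring_def val_ge_def)
lemma P_iff: "x \<in> Pv \<longleftrightarrow> x = 0 \<or> 1 \<le> v x" by (simp add: val_ideal_def val_ge_def)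

lemma O_0[simp]: "0 \<in> Ov" and O_1[simp]: "1 \<in> Ov" and O_m1[simp]: "-1 \<in> Ov"
  by (auto simp: O_iff v1 vm1)
lemma O_add[simp]: "a \<in> Ov \<Longrightarrow> b \<in> Ov \<Longrightarrow> a + b \<in> Ov"
  unfolding O_iff using vadd[of a b] by (cases "a = 0 \<or> b = 0 \<or> a + b = 0") auto
lemma O_mult[simp]: "a \<in> Ov \<Longrightarrow> b \<in> Ov \<Longrightarrow> a * b \<in> Ov"
  unfolding O_iff by (cases "a = 0 \<or> b = 0") (auto simp: vmult)
lemma O_neg[simp]: "a \<in> Ov \<Longrightarrow> - a \<in> Ov"
  unfolding O_iff by (cases "a = 0") (auto simp: vneg)
lemma O_diff[simp]: "a \<in> Ov \<Longrightarrow> b \<in> Ov \<Longrightarrow> a - b \<in> Ov"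
  using O_add[of a "-b"] by simp
lemma O_div: "a \<in> Ov \<Longrightarrow> b \<noteq> 0 \<Longrightarrow> (a = 0 \<or> v b \<le> v a) \<Longrightarrow> a / b \<in> Ov"
  unfolding O_iff by (cases "a = 0") (auto simp: divide_inverse vmult vinv)
lemma P_add: "a \<in> Pv \<Longrightarrow> b \<in> Pv \<Longrightarrow> a + b \<in> Pv"
  unfolding P_iff using vadd[of a b] by (cases "a = 0 \<or> b = 0 \<or> a + b = 0") auto
lemma P_mult: "a \<in> Ov \<Longrightarrow> b \<in> Pv \<Longrightarrow> a * b \<in> Pv"
  unfolding P_iff O_iff by (cases "a = 0 \<or> b = 0") (auto simp: vmult)
lemma P_mult2: "a \<in> Pv \<Longrightarrow> b \<in> Ov \<Longrightarrow> a * b \<in> Pv"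
  using P_mult[of b a] by (simp add: mult.commute)
lemma P_neg: "a \<in> Pv \<Longrightarrow> - a \<in> Pv"
  unfolding P_iff by (cases "a = 0") (auto simp: vneg)
lemma P_diff: "a \<in> Pv \<Longrightarrow> b \<in> Pv \<Longrightarrow> a - b \<in> Pv"
  using P_add[of a "-b"] P_neg[of b] by simp
lemma one_notin_P: "1 \<notin> Pv" by (simp add: P_iff v1)
lemma unit_div: "a \<in> Ov \<Longrightarrow> a \<notin> Pv \<Longrightarrow> b \<in> Ov \<Longrightarrow> b / a \<in> Ov \<and> a \<noteq> 0"
  apply (rule conjI)
   apply (rule O_div) apply (auto simp: O_iff P_iff)
  done

end

lemma det2: assumes "(A::'a::comm_ring_1 mat) \<in> carrier_mat 2 2"
  shows "det A = A$$(0,0) * A$$(Suc 0,Suc 0) - A$$(0,Suc 0) * A$$(Suc 0,0)"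
proof -
  have 1: "det B = B$$(0,0)" if "(B::'a mat) \<in> carrier_mat 1 1" for B
    using laplace_expansion_column[OF that, of 0] that
    by (simp add: cofactor_def mat_delete_def)
  show ?thesis
    using laplace_expansion_column[OF assms, of 0] assms
    apply (simp add: cofactor_def numeral_2_eq_2 lessThan_Suc)
    apply (subst 1, simp add: mat_delete_def)+
    apply (simp add: mat_delete_def)
    done
qed

lemma less4: "(i::nat) < 4 \<longleftrightarrow> i = 0 \<or> i = 1 \<or> i = 2 \<or> i = 3" by auto
lemma less2: "(i::nat) < 2 \<longleftrightarrow> i = 0 \<or> i = 1" by auto

declare index_mult_mat(1)[simp del]

lemma mult4[simp]: "dim_col A = 4 \<Longrightarrow> dim_row B = 4 \<Longrightarrow> i < dim_row A \<Longrightarrow> j < dim_col B \<Longrightarrow>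
  (A * B) $$ (i,j) = A$$(i,0)*B$$(0,j) + A$$(i,Suc 0)*B$$(Suc 0,j) + A$$(i,2)*B$$(2,j) + A$$(i,3)*B$$(3,j)"
  by (simp add: index_mult_mat(1) scalar_prod_def eval_nat_numeral atLeast0_lessThan_Suc add.commute add.left_commute)

lemma mult2[simp]: "dim_col A = 2 \<Longrightarrow> dim_row B = 2 \<Longrightarrow> i < dim_row A \<Longrightarrow> j < dim_col B \<Longrightarrow>
  (A * B) $$ (i,j) = A$$(i,0)*B$$(0,j) + A$$(i,Suc 0)*B$$(Suc 0,j)"
  by (simp add: index_mult_mat(1) scalar_prod_def eval_nat_numeral atLeast0_lessThan_Suc add.commute add.left_commute)

lemma mat4_eqI: "A \<in> carrier_mat 4 4 \<Longrightarrow> B \<in> carrier_mat 4 4 \<Longrightarrow>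
  (\<And>i j. i \<in> {0,1,2,3} \<Longrightarrow> j \<in> {0,1,2,3} \<Longrightarrow> A $$ (i,j) = B $$ (i,j)) \<Longrightarrow> A = B"
  by (rule eq_matI) (auto simp: less4)
lemma mat2_eqI: "A \<in> carrier_mat 2 2 \<Longrightarrow> B \<in> carrier_mat 2 2 \<Longrightarrow>
  (\<And>i j. i \<in> {0,1} \<Longrightarrow> j \<in> {0,1} \<Longrightarrow> A $$ (i,j) = B $$ (i,j)) \<Longrightarrow> A = B"
  by (rule eq_matI) (auto simp: less2)

definition mat2 :: "'a \<Rightarrow> 'a \<Rightarrow> 'a \<Rightarrow> 'a \<Rightarrow> 'a mat" where
  "mat2 p q r s = mat 2 2 (\<lambda>(i,j). if i = 0 then (if j = 0 then p else q) else (if j = 0 then r else s))"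

lemma mat2_carrier[simp]: "mat2 p q r s \<in> carrier_mat 2 2" "dim_row (mat2 p q r s) = 2" "dim_col (mat2 p q r s) = 2"
  by (auto simp: mat2_def)
lemma mat2_idx[simp]: "mat2 p q r s $$ (0,0) = p" "mat2 p q r s $$ (0,Suc 0) = q"
   "mat2 p q r s $$ (Suc 0,0) = r" "mat2 p q r s $$ (Suc 0,Suc 0) = s"
  by (auto simp: mat2_def)

lemma embed_mid_carrier[simp]: "embed_mid B \<in> carrier_mat 4 4" "dim_row (embed_mid B) = 4" "dim_col (embed_mid B) = 4"
  by (auto simp: embed_mid_def)
lemma embed_mid_idx[simp]:
  "embed_mid B $$ (0,0) = 1" "embed_mid B $$ (0,Suc 0) = 0" "embed_mid B $$ (0,2) = 0" "embed_mid B $$ (0,3) = 0"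
  "embed_mid B $$ (Suc 0,0) = 0" "embed_mid B $$ (Suc 0,Suc 0) = B$$(0,0)" "embed_mid B $$ (Suc 0,2) = B$$(0,Suc 0)" "embed_mid B $$ (Suc 0,3) = 0"
  "embed_mid B $$ (2,0) = 0" "embed_mid B $$ (2,Suc 0) = B$$(Suc 0,0)" "embed_mid B $$ (2,2) = B$$(Suc 0,Suc 0)" "embed_mid B $$ (2,3) = 0"
  "embed_mid B $$ (3,0) = 0" "embed_mid B $$ (3,Suc 0) = 0" "embed_mid B $$ (3,2) = 0" "embed_mid B $$ (3,3) = 1"
  by (auto simp: embed_mid_def)

lemma Jmat_carrier[simp]: "Jmat \<in> carrier_mat 4 4" "dim_row Jmat = 4" "dim_col Jmat = 4"
  by (auto simp: Jmat_def)
lemma Jmat_idx[simp]: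
  "Jmat $$ (0,0) = 0" "Jmat $$ (0,Suc 0) = 0" "Jmat $$ (0,2) = 0" "Jmat $$ (0,3) = 1"
  "Jmat $$ (Suc 0,0) = 0" "Jmat $$ (Suc 0,Suc 0) = 0" "Jmat $$ (Suc 0,2) = 1" "Jmat $$ (Suc 0,3) = 0"
  "Jmat $$ (2,0) = 0" "Jmat $$ (2,Suc 0) = -1" "Jmat $$ (2,2) = 0" "Jmat $$ (2,3) = 0"
  "Jmat $$ (3,0) = -1" "Jmat $$ (3,Suc 0) = 0" "Jmat $$ (3,2) = 0" "Jmat $$ (3,3) = 0"
  by (auto simp: Jmat_def)

lemma Qmat_carrier[simp]: "Qmat \<in> carrier_mat 2 2" "dim_row Qmat = 2" "dim_col Qmat = 2"
  by (auto simp: Qmat_def)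
lemma Qmat_idx[simp]: "Qmat $$ (0,0) = 0" "Qmat $$ (0,Suc 0) = 1" "Qmat $$ (Suc 0,0) = 1" "Qmat $$ (Suc 0,Suc 0) = 0"
  by (auto simp: Qmat_def)

definition blk :: "'a::field mat \<Rightarrow> 'a mat \<Rightarrow> 'a mat" where
  "blk A D = four_block_mat A (0\<^sub>m 2 2) (0\<^sub>m 2 2) D"

lemma blk_carrier[simp]: "A \<in> carrier_mat 2 2 \<Longrightarrow> D \<in> carrier_mat 2 2 \<Longrightarrow> blk A D \<in> carrier_mat 4 4"
  "A \<in> carrier_mat 2 2 \<Longrightarrow> D \<in> carrier_mat 2 2 \<Longrightarrow> dim_row (blk A D) = 4"
  "A \<in> carrier_mat 2 2 \<Longrightarrow> D \<in> carrier_mat 2 2 \<Longrightarrow> dim_col (blk A D) = 4"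
  by (auto simp: blk_def)
lemma blk_idx[simp]: assumes "A \<in> carrier_mat 2 2" "D \<in> carrier_mat 2 2" shows
  "blk A D $$ (0,0) = A$$(0,0)" "blk A D $$ (0,Suc 0) = A$$(0,Suc 0)" "blk A D $$ (0,2) = 0" "blk A D $$ (0,3) = 0"
  "blk A D $$ (Suc 0,0) = A$$(Suc 0,0)" "blk A D $$ (Suc 0,Suc 0) = A$$(Suc 0,Suc 0)" "blk A D $$ (Suc 0,2) = 0" "blk A D $$ (Suc 0,3) = 0"
  "blk A D $$ (2,0) = 0" "blk A D $$ (2,Suc 0) = 0" "blk A D $$ (2,2) = D$$(0,0)" "blk A D $$ (2,3) = D$$(0,Suc 0)"
  "blk A D $$ (3,0) = 0" "blk A D $$ (3,Suc 0) = 0" "blk A D $$ (3,2) = D$$(Suc 0,0)" "blk A D $$ (3,3) = D$$(Suc 0,Suc 0)"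
  using assms by (auto simp: blk_def)

lemma one4_idx[simp]:
  "1\<^sub>m 4 $$ (0,0) = (1::'a::field)" "1\<^sub>m 4 $$ (0,Suc 0) = (0::'a)" "1\<^sub>m 4 $$ (0,2) = (0::'a)" "1\<^sub>m 4 $$ (0,3) = (0::'a)"
  "1\<^sub>m 4 $$ (Suc 0,0) = (0::'a)" "1\<^sub>m 4 $$ (Suc 0,Suc 0) = (1::'a)" "1\<^sub>m 4 $$ (Suc 0,2) = (0::'a)" "1\<^sub>m 4 $$ (Suc 0,3) = (0::'a)"
  "1\<^sub>m 4 $$ (2,0) = (0::'a)" "1\<^sub>m 4 $$ (2,Suc 0) = (0::'a)" "1\<^sub>m 4 $$ (2,2) = (1::'a)" "1\<^sub>m 4 $$ (2,3) = (0::'a)"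
  "1\<^sub>m 4 $$ (3,0) = (0::'a)" "1\<^sub>m 4 $$ (3,Suc 0) = (0::'a)" "1\<^sub>m 4 $$ (3,2) = (0::'a)" "1\<^sub>m 4 $$ (3,3) = (1::'a)"
  by auto
lemma one2_idx[simp]:
  "1\<^sub>m 2 $$ (0,0) = (1::'a::field)" "1\<^sub>m 2 $$ (0,Suc 0) = (0::'a)" "1\<^sub>m 2 $$ (Suc 0,0) = (0::'a)" "1\<^sub>m 2 $$ (Suc 0,Suc 0) = (1::'a)"
  by auto

lemma tr2_idx[simp]: "A \<in> carrier_mat 2 2 \<Longrightarrow> transpose_mat A $$ (0,0) = A$$(0,0)"
  "A \<in> carrier_mat 2 2 \<Longrightarrow> transpose_mat A $$ (0,Suc 0) = A$$(Suc 0,0)"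
  "A \<in> carrier_mat 2 2 \<Longrightarrow> transpose_mat A $$ (Suc 0,0) = A$$(0,Suc 0)"
  "A \<in> carrier_mat 2 2 \<Longrightarrow> transpose_mat A $$ (Suc 0,Suc 0) = A$$(Suc 0,Suc 0)"
  by auto

lemma tr4_idx[simp]: "A \<in> carrier_mat 4 4 \<Longrightarrow> i < 4 \<Longrightarrow> j < 4 \<Longrightarrow> transpose_mat A $$ (i,j) = A$$(j,i)"
  by auto


definition om :: "'a::field mat \<Rightarrow> nat \<Rightarrow> nat \<Rightarrow> 'a" where
  "om g i j = g$$(0,i)*g$$(3,j) + g$$(1,i)*g$$(2,j) - g$$(2,i)*g$$(1,j) - g$$(3,i)*g$$(0,j)"

lemma sympl_entry: assumes "g \<in> carrier_mat 4 4" "i < 4" "j < 4"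
  shows "(transpose_mat g * Jmat * g) $$ (i,j) = om g i j"
  using assms by (simp add: om_def algebra_simps)

lemma om_anti: "om g j i = - om g i j" "om g i i = 0" by (simp_all add: om_def algebra_simps)

lemma sympl_get: assumes "g \<in> carrier_mat 4 4" "transpose_mat g * Jmat * g = Jmat" "i < 4" "j < 4"
  shows "om g i j = Jmat $$ (i,j)"
  using sympl_entry[OF assms(1,3,4)] unfolding assms(2) by simp

lemma sympl6: assumes g: "(g::'a::field mat) \<in> carrier_mat 4 4"
  and a: "om g 0 1 = 0" "om g 0 2 = 0" "om g 0 3 = 1" "om g 1 2 = 1" "om g 1 3 = 0" "om g 2 3 = 0"
  shows "transpose_mat g * Jmat * g = Jmat"
proof (rule eq_matI)
  fix i j assume "i < dim_row Jmat" "j < dim_col Jmat"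
  then have ij: "i < 4" "j < 4" by auto
  have o: "om g i j = Jmat $$ (i,j)"
  proof -
    from ij have "(i = 0 \<or> i = 1 \<or> i = 2 \<or> i = 3)" "(j = 0 \<or> j = 1 \<or> j = 2 \<or> j = 3)" by auto
    then show ?thesis
      apply (elim disjE)
      apply (simp_all only: om_anti(2) om_anti(1)[of g 1 0] om_anti(1)[of g 2 0] om_anti(1)[of g 3 0]
      om_anti(1)[of g 2 1] om_anti(1)[of g 3 1] om_anti(1)[of g 3 2] a)
      apply (simp_all add: Jmat_def)
      done
  qed
  show "(transpose_mat g * Jmat * g) $$ (i,j) = Jmat $$ (i,j)" unfolding sympl_entry[OF g ij] o ..
qed (use g in auto)

lemma mc2: "A \<in> carrier_mat 2 2 \<Longrightarrow> B \<in> carrier_mat 2 2 \<Longrightarrow> A * B \<in> carrier_mat 2 2"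
  by (rule mult_carrier_mat)
lemma mc4: "A \<in> carrier_mat 4 4 \<Longrightarrow> B \<in> carrier_mat 4 4 \<Longrightarrow> A * B \<in> carrier_mat 4 4"
  by (rule mult_carrier_mat)

lemma all4: "(\<forall>i::nat<4. P i) \<longleftrightarrow> P 0 \<and> P 1 \<and> P 2 \<and> (P 3::bool)"
  unfolding less4 by blast
lemma all2: "(\<forall>i::nat<2. P i) \<longleftrightarrow> P 0 \<and> (P 1::bool)"
  unfolding less2 by blast

lemma K1_iff: "k \<in> K1 v \<longleftrightarrow> (\<exists>A D. k = blk A D \<and> A \<in> GL2_O v \<and> D \<in> carrier_mat 2 2 \<and>
             (Qmat * D * Qmat) * transpose_mat A = 1\<^sub>m 2 \<and>
             transpose_mat A * (Qmat * D * Qmat) = 1\<^sub>m 2)"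
  unfolding K1_def blk_def mem_Collect_eq ..

context dv begin

lemma int_mat4_mult: assumes "g \<in> int_mat v 4" "h \<in> int_mat v 4" shows "g * h \<in> int_mat v 4"
proof -
  have g: "g \<in> carrier_mat 4 4" "\<And>i j. i < 4 \<Longrightarrow> j < 4 \<Longrightarrow> g $$ (i,j) \<in> Ov"
   and h: "h \<in> carrier_mat 4 4" "\<And>i j. i < 4 \<Longrightarrow> j < 4 \<Longrightarrow> h $$ (i,j) \<in> Ov"
    using assms unfolding int_mat_def by blast+
  have "(g * h) $$ (i,j) \<in> Ov" if "i < 4" "j < 4" for i j
  proof -
    have d: "dim_col g = 4" "dim_row h = 4" "i < dim_row g" "j < dim_col h" using g(1) h(1) that by auto
    show ?thesis unfolding mult4[OF d] by (intro O_add O_mult g h that) simp_all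
  qed
  moreover have "g * h \<in> carrier_mat 4 4" using g(1) h(1) by (rule mult_carrier_mat)
  ultimately show ?thesis unfolding int_mat_def by blast
qed

lemma Sp4_mult: assumes "g \<in> Sp4_O v" "h \<in> Sp4_O v" shows "g * h \<in> Sp4_O v"
proof -
  have g: "g \<in> carrier_mat 4 4" and h: "h \<in> carrier_mat 4 4"
    and sg: "transpose_mat g * Jmat * g = Jmat" and sh: "transpose_mat h * Jmat * h = Jmat"
    and ig: "g \<in> int_mat v 4" and ih: "h \<in> int_mat v 4"
    using assms unfolding Sp4_O_def int_mat_def by blast+
  have gt: "transpose_mat g \<in> carrier_mat 4 4" and ht: "transpose_mat h \<in> carrier_mat 4 4" using g h by auto
  have J: "Jmat \<in> carrier_mat 4 4" by simp
  have c1: "transpose_mat g * Jmat \<in> carrier_mat 4 4" using gt J by (rule mult_carrier_mat)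
  have c2: "transpose_mat g * Jmat * g \<in> carrier_mat 4 4" using c1 g by (rule mult_carrier_mat)
  have c3: "transpose_mat h * transpose_mat g \<in> carrier_mat 4 4" using ht gt by (rule mult_carrier_mat)
  have c4: "transpose_mat h * transpose_mat g * Jmat \<in> carrier_mat 4 4" using c3 J by (rule mult_carrier_mat)
  have "transpose_mat (g * h) * Jmat * (g * h) = (transpose_mat h * transpose_mat g) * Jmat * (g * h)"
    by (simp only: transpose_mult[OF g h])
  also have "\<dots> = ((transpose_mat h * transpose_mat g) * Jmat * g) * h"
    by (rule assoc_mult_mat[symmetric, OF c4 g h])
  also have "(transpose_mat h * transpose_mat g) * Jmat = transpose_mat h * (transpose_mat g * Jmat)"
    by (rule assoc_mult_mat[OF ht gt J])
  also have "transpose_mat h * (transpose_mat g * Jmat) * g = transpose_mat h * (transpose_mat g * Jmat * g)"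
    by (rule assoc_mult_mat[OF ht c1 g])
  also have "\<dots> = transpose_mat h * Jmat" by (simp only: sg)
  also have "transpose_mat h * Jmat * h = Jmat" by (rule sh)
  finally have "transpose_mat (g * h) * Jmat * (g * h) = Jmat" .
  moreover have "g * h \<in> int_mat v 4" using ig ih by (rule int_mat4_mult)
  ultimately show ?thesis unfolding Sp4_O_def by blast
qed

lemma one_Sp4: "1\<^sub>m 4 \<in> Sp4_O v"
  unfolding Sp4_O_def int_mat_def all4 by (auto intro!: sympl6 simp: om_def)

lemma K2_Sp4: assumes "k \<in> K2 v" shows "k \<in> Sp4_O v"
proof -
  obtain B where B: "B \<in> SL2_O v" and k: "k = embed_mid B" using assms unfolding K2_def by blast
  have Bc: "B \<in> carrier_mat 2 2" and Bi: "\<forall>i<2. \<forall>j<2. B$$(i,j) \<in> Ov" and d: "det B = 1"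
    using B unfolding SL2_O_def int_mat_def by blast+
  have b: "B$$(0,0) \<in> Ov" "B$$(0,1) \<in> Ov" "B$$(1,0) \<in> Ov" "B$$(1,1) \<in> Ov" using Bi by auto
  have d': "B$$(0,0) * B$$(1,1) - B$$(0,1) * B$$(1,0) = 1" using d det2[OF Bc] by simp
  have i: "embed_mid B \<in> int_mat v 4" unfolding int_mat_def all4 using b by simp
  have s: "transpose_mat (embed_mid B) * Jmat * embed_mid B = Jmat"
    by (rule sympl6) (use d' in \<open>simp_all add: om_def algebra_simps\<close>)
  show ?thesis unfolding k Sp4_O_def using i s by blast
qed

lemma K1_Sp4: assumes "k \<in> K1 v" shows "k \<in> Sp4_O v"
proof -
  obtain A D where k: "k = blk A D" and A: "A \<in> GL2_O v" and Dc: "D \<in> carrier_mat 2 2"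
    and e2: "transpose_mat A * (Qmat * D * Qmat) = 1\<^sub>m 2"
    using assms unfolding K1_iff by metis
  have Ai': "A \<in> int_mat v 2" and "\<exists>B\<in>int_mat v 2. A * B = 1\<^sub>m 2 \<and> B * A = 1\<^sub>m 2"
    using A unfolding GL2_O_def by blast+
  then obtain B where B: "B \<in> int_mat v 2" and AB: "A * B = 1\<^sub>m 2" by blast
  have Ac: "A \<in> carrier_mat 2 2" and Ai: "\<forall>i<2. \<forall>j<2. A$$(i,j) \<in> Ov" using Ai' unfolding int_mat_def by blast+
  have Bc: "B \<in> carrier_mat 2 2" and Bi: "\<forall>i<2. \<forall>j<2. B$$(i,j) \<in> Ov" using B unfolding int_mat_def by blast+
  define X where "X = Qmat * D * Qmat"
  have Xc: "X \<in> carrier_mat 2 2" unfolding X_def by (intro mc2 Dc Qmat_carrier(1))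
  have AX: "transpose_mat A * X = 1\<^sub>m 2" using e2 by (simp add: X_def)
  have At: "transpose_mat A \<in> carrier_mat 2 2" and Bt: "transpose_mat B \<in> carrier_mat 2 2" using Ac Bc by auto
  have "transpose_mat B * 1\<^sub>m 2 = transpose_mat B * (transpose_mat A * X)" by (simp only: AX)
  also have "\<dots> = (transpose_mat B * transpose_mat A) * X" 
    by (rule assoc_mult_mat[symmetric, OF Bt At Xc])
  also have "transpose_mat B * transpose_mat A = transpose_mat (A * B)" by (rule transpose_mult[symmetric, OF Ac Bc])
  also have "\<dots> = 1\<^sub>m 2" using AB by simp
  finally have BX: "transpose_mat B = X" using Bt Xc by simp
  have xe: "X$$(0,0) = D$$(1,1)" "X$$(0,1) = D$$(1,0)" "X$$(1,0) = D$$(0,1)" "X$$(1,1) = D$$(0,0)"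
    using Dc by (simp_all add: X_def)
  have bx: "X$$(0,0) = B$$(0,0)" "X$$(0,1) = B$$(1,0)" "X$$(1,0) = B$$(0,1)" "X$$(1,1) = B$$(1,1)"
    using BX[symmetric] Bc by simp_all
  have b: "B$$(0,0) \<in> Ov" "B$$(0,1) \<in> Ov" "B$$(1,0) \<in> Ov" "B$$(1,1) \<in> Ov" using Bi by auto
  have a: "A$$(0,0) \<in> Ov" "A$$(0,1) \<in> Ov" "A$$(1,0) \<in> Ov" "A$$(1,1) \<in> Ov" using Ai by auto
  have dd: "D$$(0,0) \<in> Ov" "D$$(0,1) \<in> Ov" "D$$(1,0) \<in> Ov" "D$$(1,1) \<in> Ov"
    using b xe bx by metis+
  have eqs: "(transpose_mat A * X) $$ (i,j) = 1\<^sub>m 2 $$ (i,j)" for i j using AX by simp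
  have s1: "A$$(0,0) * D$$(1,1) + A$$(1,0) * D$$(0,1) = 1" using eqs[of 0 0] Ac Dc by (simp add: X_def)
  have s2: "A$$(0,0) * D$$(1,0) + A$$(1,0) * D$$(0,0) = 0" using eqs[of 0 1] Ac Dc by (simp add: X_def)
  have s3: "A$$(0,1) * D$$(1,1) + A$$(1,1) * D$$(0,1) = 0" using eqs[of 1 0] Ac Dc by (simp add: X_def)
  have s4: "A$$(0,1) * D$$(1,0) + A$$(1,1) * D$$(0,0) = 1" using eqs[of 1 1] Ac Dc by (simp add: X_def)
  have i: "blk A D \<in> int_mat v 4" unfolding int_mat_def all4 using a dd Ac Dc by simp
  have s: "transpose_mat (blk A D) * Jmat * blk A D = Jmat"
    by (rule sympl6) (use Ac Dc s1 s2 s3 s4 in \<open>simp_all add: om_def algebra_simps\<close>)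
  show ?thesis unfolding k Sp4_O_def using i s by blast
qed

end

lemma mat4_eqI': assumes "A \<in> carrier_mat 4 4" "B \<in> carrier_mat 4 4"
  "A$$(0,0) = B$$(0,0)" "A$$(0,1) = B$$(0,1)" "A$$(0,2) = B$$(0,2)" "A$$(0,3) = B$$(0,3)"
  "A$$(1,0) = B$$(1,0)" "A$$(1,1) = B$$(1,1)" "A$$(1,2) = B$$(1,2)" "A$$(1,3) = B$$(1,3)"
  "A$$(2,0) = B$$(2,0)" "A$$(2,1) = B$$(2,1)" "A$$(2,2) = B$$(2,2)" "A$$(2,3) = B$$(2,3)"
  "A$$(3,0) = B$$(3,0)" "A$$(3,1) = B$$(3,1)" "A$$(3,2) = B$$(3,2)" "A$$(3,3) = B$$(3,3)"
  shows "A = B"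
proof (rule mat4_eqI[OF assms(1,2)])
  fix i j :: nat assume "i \<in> {0,1,2,3}" "j \<in> {0,1,2,3}"
  then show "A $$ (i,j) = B $$ (i,j)" using assms(3-18) by (elim insertE emptyE) simp_all
qed

lemma mat2_eqI': assumes "A \<in> carrier_mat 2 2" "B \<in> carrier_mat 2 2"
  "A$$(0,0) = B$$(0,0)" "A$$(0,1) = B$$(0,1)" "A$$(1,0) = B$$(1,0)" "A$$(1,1) = B$$(1,1)"
  shows "A = B"
proof (rule mat2_eqI[OF assms(1,2)])
  fix i j :: nat assume "i \<in> {0,1}" "j \<in> {0,1}"
  then show "A $$ (i,j) = B $$ (i,j)" using assms(3-6) by (elim insertE emptyE) simp_all
qed

lemma mat2_eta: "A \<in> carrier_mat 2 2 \<Longrightarrow> A = mat2 (A$$(0,0)) (A$$(0,1)) (A$$(1,0)) (A$$(1,1))"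
  by (rule mat2_eqI') simp_all

lemma one2_mat2: "1\<^sub>m 2 = mat2 1 0 0 (1::'a::field)"
  by (rule mat2_eqI') simp_all

lemma mat2_mult: "mat2 a b c d * mat2 p q r s = mat2 (a*p+b*r) (a*q+b*s) (c*p+d*r) (c*q+d*s)"
  by (rule mat2_eqI') (simp_all add: mc2)

lemma mat2_transpose: "transpose_mat (mat2 a b c d) = mat2 a c b d"
  by (rule mat2_eqI') simp_all

lemma QmatQ: "Qmat * mat2 a b c d * Qmat = mat2 d c b (a::'a::field)"
  by (rule mat2_eqI') (simp_all add: mc2)

lemma mat2_eq_iff: "mat2 a b c d = mat2 a' b' c' d' \<longleftrightarrow> a = a' \<and> b = b' \<and> c = c' \<and> d = d'"
  by (metis mat2_idx)

context dv begin

lemma int_mat2_mat2: "mat2 a b c d \<in> int_mat v 2 \<longleftrightarrow> a \<in> Ov \<and> b \<in> Ov \<and> c \<in> Ov \<and> d \<in> Ov"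
  unfolding int_mat_def all2 mem_Collect_eq by simp

definition K1P where "K1P a b c d p q r s \<longleftrightarrow> a \<in> Ov \<and> b \<in> Ov \<and> c \<in> Ov \<and> d \<in> Ov \<and>
  p \<in> Ov \<and> q \<in> Ov \<and> r \<in> Ov \<and> s \<in> Ov \<and>
  a*p+b*r = 1 \<and> a*q+b*s = 0 \<and> c*p+d*r = 0 \<and> c*q+d*s = 1 \<and>
  p*a+q*c = 1 \<and> p*b+q*d = 0 \<and> r*a+s*c = 0 \<and> r*b+s*d = 1"

lemma K1I: assumes "K1P a b c d p q r s"
  shows "blk (mat2 a b c d) (mat2 s q r p) \<in> K1 v"
  unfolding K1_iff
proof (intro exI conjI)
  show "blk (mat2 a b c d) (mat2 s q r p) = blk (mat2 a b c d) (mat2 s q r p)" ..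
  show "mat2 a b c d \<in> GL2_O v" unfolding GL2_O_def mem_Collect_eq
  proof (intro conjI bexI)
    show "mat2 a b c d \<in> int_mat v 2" using assms unfolding int_mat2_mat2 K1P_def by blast
    show "mat2 p q r s \<in> int_mat v 2" using assms unfolding int_mat2_mat2 K1P_def by blast
    show "mat2 a b c d * mat2 p q r s = 1\<^sub>m 2" using assms unfolding mat2_mult one2_mat2 mat2_eq_iff K1P_def by blast
    show "mat2 p q r s * mat2 a b c d = 1\<^sub>m 2" using assms unfolding mat2_mult one2_mat2 mat2_eq_iff K1P_def by blast
  qed
  show "mat2 s q r p \<in> carrier_mat 2 2" by simp
  show "Qmat * mat2 s q r p * Qmat * transpose_mat (mat2 a b c d) = 1\<^sub>m 2"
    using assms unfolding QmatQ mat2_transpose mat2_mult one2_mat2 mat2_eq_iff K1P_def by (simp add: ac_simps)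
  show "transpose_mat (mat2 a b c d) * (Qmat * mat2 s q r p * Qmat) = 1\<^sub>m 2"
    using assms unfolding QmatQ mat2_transpose mat2_mult one2_mat2 mat2_eq_iff K1P_def by (simp add: ac_simps)
qed

lemma K1E: assumes "k \<in> K1 v"
  obtains a b c d p q r s where "K1P a b c d p q r s" "k = blk (mat2 a b c d) (mat2 s q r p)"
proof -
  obtain A D where k: "k = blk A D" and A: "A \<in> GL2_O v" and Dc: "D \<in> carrier_mat 2 2"
    and e2: "transpose_mat A * (Qmat * D * Qmat) = 1\<^sub>m 2"
    using assms unfolding K1_iff by metis
  have Ai': "A \<in> int_mat v 2" and "\<exists>B\<in>int_mat v 2. A * B = 1\<^sub>m 2 \<and> B * A = 1\<^sub>m 2"
    using A unfolding GL2_O_def by blast+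
  then obtain B where B: "B \<in> int_mat v 2" and AB: "A * B = 1\<^sub>m 2" and BA: "B * A = 1\<^sub>m 2" by blast
  have Ac: "A \<in> carrier_mat 2 2" using Ai' unfolding int_mat_def by blast
  have Bc: "B \<in> carrier_mat 2 2" using B unfolding int_mat_def by blast
  define a b c d where "a = A$$(0,0)" "b = A$$(0,1)" "c = A$$(1,0)" "d = A$$(1,1)"
  define p q r s where "p = B$$(0,0)" "q = B$$(0,1)" "r = B$$(1,0)" "s = B$$(1,1)"
  define x y z w where "x = D$$(0,0)" "y = D$$(0,1)" "z = D$$(1,0)" "w = D$$(1,1)"
  have Ae: "A = mat2 a b c d" unfolding a_b_c_d_def by (rule mat2_eta[OF Ac])
  have Be: "B = mat2 p q r s" unfolding p_q_r_s_def by (rule mat2_eta[OF Bc])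
  have De: "D = mat2 x y z w" unfolding x_y_z_w_def by (rule mat2_eta[OF Dc])
  have ABe: "a*p+b*r = 1 \<and> a*q+b*s = 0 \<and> c*p+d*r = 0 \<and> c*q+d*s = 1"
    using AB unfolding Ae Be mat2_mult one2_mat2 mat2_eq_iff .
  have BAe: "p*a+q*c = 1 \<and> p*b+q*d = 0 \<and> r*a+s*c = 0 \<and> r*b+s*d = 1"
    using BA unfolding Ae Be mat2_mult one2_mat2 mat2_eq_iff .
  have Ee: "a*w+c*y = 1 \<and> a*z+c*x = 0 \<and> b*w+d*y = 0 \<and> b*z+d*x = 1"
    using e2 unfolding Ae De QmatQ mat2_transpose mat2_mult one2_mat2 mat2_eq_iff .
  have io: "a \<in> Ov \<and> b \<in> Ov \<and> c \<in> Ov \<and> d \<in> Ov" using Ai' unfolding Ae int_mat2_mat2 .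
  have io2: "p \<in> Ov \<and> q \<in> Ov \<and> r \<in> Ov \<and> s \<in> Ov" using B unfolding Be int_mat2_mat2 .
  have "w = p"
  proof -
    have "w = w*(a*p+b*r) + y*(c*p+d*r)" using ABe by simp
    also have "\<dots> = p*(a*w+c*y) + r*(b*w+d*y)" by (simp add: algebra_simps)
    also have "\<dots> = p" using Ee by simp
    finally show ?thesis .
  qed
  moreover have "y = q"
  proof -
    have "y = w*(a*q+b*s) + y*(c*q+d*s)" using ABe by simp
    also have "\<dots> = q*(a*w+c*y) + s*(b*w+d*y)" by (simp add: algebra_simps)
    also have "\<dots> = q" using Ee by simp
    finally show ?thesis .
  qed
  moreover have "z = r"
  proof -
    have "z = z*(a*p+b*r) + x*(c*p+d*r)" using ABe by simp
    also have "\<dots> = p*(a*z+c*x) + r*(b*z+d*x)" by (simp add: algebra_simps)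
    also have "\<dots> = r" using Ee by simp
    finally show ?thesis .
  qed
  moreover have "x = s"
  proof -
    have "x = z*(a*q+b*s) + x*(c*q+d*s)" using ABe by simp
    also have "\<dots> = q*(a*z+c*x) + s*(b*z+d*x)" by (simp add: algebra_simps)
    also have "\<dots> = s" using Ee by simp
    finally show ?thesis .
  qed
  ultimately have "D = mat2 s q r p" unfolding De by simp
  then have "k = blk (mat2 a b c d) (mat2 s q r p)" unfolding k Ae by simp
  moreover have "K1P a b c d p q r s" unfolding K1P_def using io io2 ABe BAe by blast
  ultimately show ?thesis using that by blast
qed

definition K2P where "K2P a b c d \<longleftrightarrow> a \<in> Ov \<and> b \<in> Ov \<and> c \<in> Ov \<and> d \<in> Ov \<and> a*d - b*c = 1"

lemma K2I: assumes "K2P a b c d" shows "embed_mid (mat2 a b c d) \<in> K2 v"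
  unfolding K2_def
proof (rule imageI)
  have "det (mat2 a b c d) = a*d - b*c" by (simp add: det2)
  then show "mat2 a b c d \<in> SL2_O v" using assms unfolding SL2_O_def K2P_def mem_Collect_eq int_mat2_mat2
    by simp
qed

lemma K2E: assumes "k \<in> K2 v" obtains a b c d where "K2P a b c d" "k = embed_mid (mat2 a b c d)"
proof -
  obtain B where B: "B \<in> SL2_O v" and k: "k = embed_mid B" using assms unfolding K2_def by blast
  have Bi: "B \<in> int_mat v 2" and d: "det B = 1" using B unfolding SL2_O_def by blast+
  have Bc: "B \<in> carrier_mat 2 2" using Bi unfolding int_mat_def by blast
  define a b c d where "a = B$$(0,0)" "b = B$$(0,1)" "c = B$$(1,0)" "d = B$$(1,1)"
  have Be: "B = mat2 a b c d" unfolding a_b_c_d_def by (rule mat2_eta[OF Bc])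
  have "a*d - b*c = 1" using d unfolding Be by (simp add: det2)
  moreover have "a \<in> Ov \<and> b \<in> Ov \<and> c \<in> Ov \<and> d \<in> Ov" using Bi unfolding Be int_mat2_mat2 .
  ultimately have "K2P a b c d" unfolding K2P_def by blast
  then show ?thesis using that k Be by blast
qed

end

lemma blk_m_carrier[simp]: "blk (mat2 a b c d) (mat2 e f g h) \<in> carrier_mat 4 4"
  "dim_row (blk (mat2 a b c d) (mat2 e f g h)) = 4" "dim_col (blk (mat2 a b c d) (mat2 e f g h)) = 4"
  by simp_all

lemma blk_m_idx[simp]:
  "blk (mat2 a b c d) (mat2 e f g h) $$ (0,0) = a" "blk (mat2 a b c d) (mat2 e f g h) $$ (0,1) = b"
  "blk (mat2 a b c d) (mat2 e f g h) $$ (0,2) = 0" "blk (mat2 a b c d) (mat2 e f g h) $$ (0,3) = 0"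
  "blk (mat2 a b c d) (mat2 e f g h) $$ (1,0) = c" "blk (mat2 a b c d) (mat2 e f g h) $$ (1,1) = d"
  "blk (mat2 a b c d) (mat2 e f g h) $$ (1,2) = 0" "blk (mat2 a b c d) (mat2 e f g h) $$ (1,3) = 0"
  "blk (mat2 a b c d) (mat2 e f g h) $$ (2,0) = 0" "blk (mat2 a b c d) (mat2 e f g h) $$ (2,1) = 0"
  "blk (mat2 a b c d) (mat2 e f g h) $$ (2,2) = e" "blk (mat2 a b c d) (mat2 e f g h) $$ (2,3) = f"
  "blk (mat2 a b c d) (mat2 e f g h) $$ (3,0) = 0" "blk (mat2 a b c d) (mat2 e f g h) $$ (3,1) = 0"
  "blk (mat2 a b c d) (mat2 e f g h) $$ (3,2) = g" "blk (mat2 a b c d) (mat2 e f g h) $$ (3,3) = h"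
  by (simp_all del: One_nat_def) (simp_all)

lemma mid_m_idx[simp]:
  "embed_mid (mat2 a b c d) $$ (1,1) = a" "embed_mid (mat2 a b c d) $$ (1,2) = b"
  "embed_mid (mat2 a b c d) $$ (2,1) = c" "embed_mid (mat2 a b c d) $$ (2,2) = d"
  by simp_all

lemma one4_blk: "1\<^sub>m 4 = blk (mat2 1 0 0 1) (mat2 1 0 0 (1::'a::field))"
  by (rule mat4_eqI') simp_all
lemma one4_mid: "1\<^sub>m 4 = embed_mid (mat2 1 0 0 (1::'a::field))"
  by (rule mat4_eqI') simp_all

lemma blk_mult: "blk (mat2 a b c d) (mat2 e f g h) * blk (mat2 a' b' c' d') (mat2 e' f' g' h') =
   blk (mat2 (a*a'+b*c') (a*b'+b*d') (c*a'+d*c') (c*b'+d*d')) (mat2 (e*e'+f*g') (e*f'+f*h') (g*e'+h*g') (g*f'+h*h'))"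
  by (rule mat4_eqI') (simp_all add: mc4)

lemma mid_mult: "embed_mid (mat2 a b c d) * embed_mid (mat2 a' b' c' d') =
   embed_mid (mat2 (a*a'+b*c') (a*b'+b*d') (c*a'+d*c') (c*b'+d*d'))"
  by (rule mat4_eqI') (simp_all add: mc4)

context dv begin

lemma one_K1: "1\<^sub>m 4 \<in> K1 v"
  unfolding one4_blk by (rule K1I[of 1 0 0 1 1 0 0 1, simplified]) (simp add: K1P_def)
lemma one_K2: "1\<^sub>m 4 \<in> K2 v"
  unfolding one4_mid by (rule K2I) (simp add: K2P_def)

lemma K1_carrier: "k \<in> K1 v \<Longrightarrow> k \<in> carrier_mat 4 4"
  by (erule K1E) simp
lemma K2_carrier: "k \<in> K2 v \<Longrightarrow> k \<in> carrier_mat 4 4"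
  by (erule K2E) simp

lemma K1_inv: assumes "k \<in> K1 v" obtains k' where "k' \<in> K1 v" "k' * k = 1\<^sub>m 4"
proof -
  obtain a b c d p q r s where P: "K1P a b c d p q r s" and k: "k = blk (mat2 a b c d) (mat2 s q r p)"
    using assms by (rule K1E)
  have P': "K1P p q r s a b c d" using P unfolding K1P_def by blast
  have "blk (mat2 p q r s) (mat2 d b c a) \<in> K1 v" by (rule K1I[OF P'])
  moreover have "blk (mat2 p q r s) (mat2 d b c a) * k = 1\<^sub>m 4"
    unfolding k blk_mult one4_blk mat2_eq_iff using P unfolding K1P_def by (simp add: algebra_simps)
  ultimately show ?thesis using that by blast
qed

lemma K2_inv: assumes "k \<in> K2 v" obtains k' where "k' \<in> K2 v" "k' * k = 1\<^sub>m 4"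
proof -
  obtain a b c d where P: "K2P a b c d" and k: "k = embed_mid (mat2 a b c d)"
    using assms by (rule K2E)
  have P': "K2P d (-b) (-c) a" using P unfolding K2P_def by (simp add: algebra_simps)
  have "embed_mid (mat2 d (-b) (-c) a) \<in> K2 v" by (rule K2I[OF P'])
  moreover have "embed_mid (mat2 d (-b) (-c) a) * k = 1\<^sub>m 4"
    unfolding k mid_mult one4_mid mat2_eq_iff using P unfolding K2P_def by (simp add: algebra_simps)
  ultimately show ?thesis using that by blast
qed

fun Wr :: "nat \<Rightarrow> 'a mat set" where
  "Wr 0 = {1\<^sub>m 4}"
| "Wr (Suc n) = {a * (b * w) | a b w. a \<in> K1 v \<and> b \<in> K2 v \<and> w \<in> Wr n}"

lemma Wr_carrier: "w \<in> Wr n \<Longrightarrow> w \<in> carrier_mat 4 4"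
proof (induction n arbitrary: w)
  case 0 then show ?case by simp
next
  case (Suc n)
  then obtain a b w' where "a \<in> K1 v" "b \<in> K2 v" "w' \<in> Wr n" "w = a * (b * w')" by auto
  then show ?case using Suc.IH K1_carrier K2_carrier by (metis mc4)
qed

lemma Wr_SucI: "a \<in> K1 v \<Longrightarrow> b \<in> K2 v \<Longrightarrow> w \<in> Wr n \<Longrightarrow> a * (b * w) \<in> Wr (Suc n)"
  by auto

lemma Wr_mult: "x \<in> Wr n \<Longrightarrow> y \<in> Wr m \<Longrightarrow> x * y \<in> Wr (n + m)"
proof (induction n arbitrary: x)
  case 0
  then have "x = 1\<^sub>m 4" by simp
  then show ?case using 0 Wr_carrier[OF 0(2)] by simp
next
  case (Suc n)
  then obtain a b w where ab: "a \<in> K1 v" "b \<in> K2 v" and w: "w \<in> Wr n" and x: "x = a * (b * w)" by auto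
  have ac: "a \<in> carrier_mat 4 4" and bc: "b \<in> carrier_mat 4 4" using ab K1_carrier K2_carrier by auto
  have wc: "w \<in> carrier_mat 4 4" using w by (rule Wr_carrier)
  have yc: "y \<in> carrier_mat 4 4" using Suc(3) by (rule Wr_carrier)
  have "x * y = a * (b * (w * y))"
    unfolding x using ac bc wc yc by (simp add: mc4 assoc_mult_mat[of _ 4 4 _ 4 _ 4])
  moreover have "w * y \<in> Wr (n + m)" using Suc.IH[OF w Suc(3)] .
  ultimately show ?case using ab by auto
qed

lemma one_Wr: "1\<^sub>m 4 \<in> Wr n"
proof (induction n)
  case 0 then show ?case by simp
next
  case (Suc n)
  have "1\<^sub>m 4 * (1\<^sub>m 4 * 1\<^sub>m 4) = (1\<^sub>m 4 :: 'a mat)" by simp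
  then show ?case using Wr_SucI[OF one_K1 one_K2 Suc] by simp
qed

lemma Wr_mono: assumes "x \<in> Wr n" "n \<le> m" shows "x \<in> Wr m"
proof -
  have "x * 1\<^sub>m 4 \<in> Wr (n + (m - n))" by (rule Wr_mult[OF assms(1) one_Wr])
  then show ?thesis using assms Wr_carrier[OF assms(1)] by simp
qed

lemma K1_Wr: "k \<in> K1 v \<Longrightarrow> k \<in> Wr 1"
  using Wr_SucI[OF _ one_K2 one_Wr[of 0], of k] K1_carrier[of k] by simp
lemma K2_Wr: "k \<in> K2 v \<Longrightarrow> k \<in> Wr 1"
  using Wr_SucI[OF one_K1 _ one_Wr[of 0], of k] K2_carrier[of k] by simp

lemma peel: assumes "k \<in> K1 v \<or> k \<in> K2 v" "g \<in> carrier_mat 4 4" "k * g \<in> Wr n"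
  shows "g \<in> Wr (Suc n)"
proof -
  obtain k' where k': "k' \<in> K1 v \<or> k' \<in> K2 v" "k' * k = 1\<^sub>m 4"
    using assms(1) K1_inv K2_inv by metis
  have kc: "k \<in> carrier_mat 4 4" and k'c: "k' \<in> carrier_mat 4 4"
    using assms(1) k'(1) K1_carrier K2_carrier by blast+
  have "k' \<in> Wr 1" using k'(1) K1_Wr K2_Wr by blast
  then have "k' * (k * g) \<in> Wr (1 + n)" using assms(3) by (rule Wr_mult)
  moreover have "k' * (k * g) = g" using kc k'c assms(2) k'(2)
    by (simp add: assoc_mult_mat[symmetric, of _ 4 4 _ 4 _ 4])
  ultimately show ?thesis by simp
qed

lemma Wr_list: "w \<in> Wr n \<Longrightarrow> \<exists>ks. length ks = 2 * n \<and>
   (\<forall>i<2*n. (even i \<longrightarrow> ks ! i \<in> K1 v) \<and> (odd i \<longrightarrow> ks ! i \<in> K2 v)) \<and> w = foldr (*) ks (1\<^sub>m 4)"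
proof (induction n arbitrary: w)
  case 0 then show ?case by simp
next
  case (Suc n)
  then obtain a b w' where ab: "a \<in> K1 v" "b \<in> K2 v" and w': "w' \<in> Wr n" and x: "w = a * (b * w')" by auto
  obtain ks where ks: "length ks = 2 * n" "\<forall>i<2*n. (even i \<longrightarrow> ks ! i \<in> K1 v) \<and> (odd i \<longrightarrow> ks ! i \<in> K2 v)"
     "w' = foldr (*) ks (1\<^sub>m 4)" using Suc.IH[OF w'] by blast
  show ?case
  proof (intro exI conjI allI impI)
    show "length (a # b # ks) = 2 * Suc n" using ks by simp
    show "w = foldr (*) (a # b # ks) (1\<^sub>m 4)" using x ks by simp
    fix i assume i: "i < 2 * Suc n"
    { assume "even i" then show "(a # b # ks) ! i \<in> K1 v"
      proof (cases i)
        case 0 then show ?thesis using ab by simp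
      next
        case (Suc j) then show ?thesis
        proof (cases j)
          case 0 then show ?thesis using Suc \<open>even i\<close> by simp
        next
          case (Suc l) then show ?thesis using \<open>i = Suc j\<close> \<open>even i\<close> ks i by auto
        qed
      qed }
    { assume "odd i" then show "(a # b # ks) ! i \<in> K2 v"
      proof (cases i)
        case 0 then show ?thesis using \<open>odd i\<close> by simp
      next
        case (Suc j) then show ?thesis
        proof (cases j)
          case 0 then show ?thesis using Suc ab by simp
        next
          case (Suc l) then show ?thesis using \<open>i = Suc j\<close> \<open>odd i\<close> ks i by auto
        qed
      qed }
  qed
qed

end

definition xa :: "'a::field \<Rightarrow> 'a mat" where "xa a = blk (mat2 1 a 0 1) (mat2 1 (-a) 0 1)"
definition wq :: "'a::field mat" where "wq = blk (mat2 0 1 1 0) (mat2 0 1 1 0)"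
definition ub :: "'a::field \<Rightarrow> 'a mat" where
  "ub b = embed_mid (mat2 0 1 (-1) 0) * (xa (-b) * embed_mid (mat2 0 (-1) 1 0))"
definition zc :: "'a::field \<Rightarrow> 'a mat" where
  "zc c = wq * (embed_mid (mat2 1 c 0 1) * wq)"

lemma xa_carrier[simp]: "xa a \<in> carrier_mat 4 4" "dim_row (xa a) = 4" "dim_col (xa a) = 4"
  by (simp_all add: xa_def)
lemma wq_carrier[simp]: "wq \<in> carrier_mat 4 4" "dim_row wq = 4" "dim_col wq = 4"
  by (simp_all add: wq_def)
lemma ub_carrier[simp]: "ub b \<in> carrier_mat 4 4" "dim_row (ub b) = 4" "dim_col (ub b) = 4"
  by (simp_all add: ub_def mc4)
lemma zc_carrier[simp]: "zc b \<in> carrier_mat 4 4" "dim_row (zc b) = 4" "dim_col (zc b) = 4"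
  by (simp_all add: zc_def mc4)

lemma xa_idx[simp]:
  "xa a $$ (0,0) = 1" "xa a $$ (0,Suc 0) = a" "xa a $$ (0,2) = 0" "xa a $$ (0,3) = 0"
  "xa a $$ (Suc 0,0) = 0" "xa a $$ (Suc 0,Suc 0) = 1" "xa a $$ (Suc 0,2) = 0" "xa a $$ (Suc 0,3) = 0"
  "xa a $$ (2,0) = 0" "xa a $$ (2,Suc 0) = 0" "xa a $$ (2,2) = 1" "xa a $$ (2,3) = -a"
  "xa a $$ (3,0) = 0" "xa a $$ (3,Suc 0) = 0" "xa a $$ (3,2) = 0" "xa a $$ (3,3) = 1"
  by (simp_all add: xa_def)

lemma wq_idx[simp]:
  "wq $$ (0,0) = 0" "wq $$ (0,Suc 0) = 1" "wq $$ (0,2) = 0" "wq $$ (0,3) = 0"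
  "wq $$ (Suc 0,0) = 1" "wq $$ (Suc 0,Suc 0) = 0" "wq $$ (Suc 0,2) = 0" "wq $$ (Suc 0,3) = 0"
  "wq $$ (2,0) = 0" "wq $$ (2,Suc 0) = 0" "wq $$ (2,2) = 0" "wq $$ (2,3) = 1"
  "wq $$ (3,0) = 0" "wq $$ (3,Suc 0) = 0" "wq $$ (3,2) = 1" "wq $$ (3,3) = 0"
  by (simp_all add: wq_def)

lemma ub_idx[simp]:
  "ub b $$ (0,0) = 1" "ub b $$ (0,Suc 0) = 0" "ub b $$ (0,2) = b" "ub b $$ (0,3) = 0"
  "ub b $$ (Suc 0,0) = 0" "ub b $$ (Suc 0,Suc 0) = 1" "ub b $$ (Suc 0,2) = 0" "ub b $$ (Suc 0,3) = b"
  "ub b $$ (2,0) = 0" "ub b $$ (2,Suc 0) = 0" "ub b $$ (2,2) = 1" "ub b $$ (2,3) = 0"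
  "ub b $$ (3,0) = 0" "ub b $$ (3,Suc 0) = 0" "ub b $$ (3,2) = 0" "ub b $$ (3,3) = 1"
  by (simp_all add: ub_def)

lemma zc_idx[simp]:
  "zc c $$ (0,0) = 1" "zc c $$ (0,Suc 0) = 0" "zc c $$ (0,2) = 0" "zc c $$ (0,3) = c"
  "zc c $$ (Suc 0,0) = 0" "zc c $$ (Suc 0,Suc 0) = 1" "zc c $$ (Suc 0,2) = 0" "zc c $$ (Suc 0,3) = 0"
  "zc c $$ (2,0) = 0" "zc c $$ (2,Suc 0) = 0" "zc c $$ (2,2) = 1" "zc c $$ (2,3) = 0"
  "zc c $$ (3,0) = 0" "zc c $$ (3,Suc 0) = 0" "zc c $$ (3,2) = 0" "zc c $$ (3,3) = 1"
  by (simp_all add: zc_def)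

context dv begin

lemma xa_K1: "a \<in> Ov \<Longrightarrow> xa a \<in> K1 v"
  unfolding xa_def using K1I[of 1 a 0 1 1 "-a" 0 1] by (simp add: K1P_def)
lemma wq_K1: "wq \<in> K1 v"
  unfolding wq_def using K1I[of 0 1 1 0 0 1 1 0] by (simp add: K1P_def)
lemma ub_Wr: "b \<in> Ov \<Longrightarrow> ub b \<in> Wr 3"
proof -
  assume b: "b \<in> Ov"
  have "embed_mid (mat2 0 1 (-1) 0) \<in> Wr 1" by (rule K2_Wr, rule K2I) (simp add: K2P_def)
  moreover have "embed_mid (mat2 0 (-1) 1 0) \<in> Wr 1" by (rule K2_Wr, rule K2I) (simp add: K2P_def)
  moreover have "xa (-b) \<in> Wr 1" using b by (intro K1_Wr xa_K1) simp
  ultimately have "embed_mid (mat2 0 1 (-1) 0) * (xa (-b) * embed_mid (mat2 0 (-1) 1 0)) \<in> Wr (1 + (1 + 1))"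
    by (intro Wr_mult)
  then show ?thesis unfolding ub_def by (simp add: numeral_3_eq_3)
qed
lemma zc_Wr: "c \<in> Ov \<Longrightarrow> zc c \<in> Wr 3"
proof -
  assume c: "c \<in> Ov"
  have "embed_mid (mat2 1 c 0 1) \<in> Wr 1" using c by (intro K2_Wr K2I) (simp add: K2P_def)
  moreover have "wq \<in> Wr 1" by (rule K1_Wr, rule wq_K1)
  ultimately have "wq * (embed_mid (mat2 1 c 0 1) * wq) \<in> Wr (1 + (1 + 1))"
    by (intro Wr_mult)
  then show ?thesis unfolding zc_def by (simp add: numeral_3_eq_3)
qed

lemma Sp4D: assumes "g \<in> Sp4_O v"
  shows "g \<in> carrier_mat 4 4" "dim_row g = 4" "dim_col g = 4" "\<And>i j. i < 4 \<Longrightarrow> j < 4 \<Longrightarrow> g$$(i,j) \<in> Ov"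
    "\<And>i j. i < 4 \<Longrightarrow> j < 4 \<Longrightarrow> om g i j = Jmat $$ (i,j)"
proof -
  show gc: "g \<in> carrier_mat 4 4" using assms unfolding Sp4_O_def int_mat_def by blast
  then show "dim_row g = 4" "dim_col g = 4" by auto
  show "\<And>i j. i < 4 \<Longrightarrow> j < 4 \<Longrightarrow> g$$(i,j) \<in> Ov" using assms unfolding Sp4_O_def int_mat_def by blast
  have "transpose_mat g * Jmat * g = Jmat" using assms unfolding Sp4_O_def by blast
  then show "\<And>i j. i < 4 \<Longrightarrow> j < 4 \<Longrightarrow> om g i j = Jmat $$ (i,j)" using sympl_get gc by blast
qed

lemma stageA: assumes g: "g \<in> Sp4_O v"
  and e: "g$$(0,0) = 1" "g$$(Suc 0,0) = 0" "g$$(2,0) = 0" "g$$(3,0) = 0"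
         "g$$(Suc 0,Suc 0) = 1" "g$$(Suc 0,2) = 0" "g$$(2,Suc 0) = 0" "g$$(2,2) = 1"
  shows "g \<in> Wr 7"
proof -
  note G = Sp4D[OF g]
  have o01: "om g 0 1 = 0" and o02: "om g 0 2 = 0" and o03: "om g 0 3 = 1" and o13: "om g 1 3 = 0" and o23: "om g 2 3 = 0"
    using G(5)[of 0 1] G(5)[of 0 2] G(5)[of 0 3] G(5)[of 1 3] G(5)[of 2 3] by simp_all
  have r31: "g$$(3,Suc 0) = 0" using o01 e by (simp add: om_def)
  have r32: "g$$(3,2) = 0" using o02 e by (simp add: om_def)
  have r33: "g$$(3,3) = 1" using o03 e by (simp add: om_def)
  have r23: "g$$(2,3) = - g$$(0,Suc 0)" using o13 e r31 r33 by (simp add: om_def algebra_simps eq_neg_iff_add_eq_0)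
  have r13: "g$$(Suc 0,3) = g$$(0,2)" using o23 e r32 r33 by (simp add: om_def)
  define a b c where "a = g$$(0,Suc 0)" "b = g$$(0,2)" "c = g$$(0,3)"
  have abc: "a \<in> Ov" "b \<in> Ov" "c \<in> Ov" unfolding a_b_c_def by (auto intro: G(4))
  have eq: "g = xa a * (ub b * zc (c - a*b))"
    by (rule mat4_eqI'[OF G(1)]) (simp_all add: mc4 e r31 r32 r33 r23 r13 a_b_c_def)
  have "xa a * (ub b * zc (c - a*b)) \<in> Wr (1 + (3 + 3))"
    using abc by (intro Wr_mult K1_Wr xa_K1 ub_Wr zc_Wr) simp_all
  then show ?thesis unfolding eq[symmetric] by simp
qed

end

lemma mid_col0: assumes "dim_row g = 4" "dim_col g = 4" shows
  "(embed_mid (mat2 p q r s) * g) $$ (0,0) = g$$(0,0)"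
  "(embed_mid (mat2 p q r s) * g) $$ (Suc 0,0) = p * g$$(Suc 0,0) + q * g$$(2,0)"
  "(embed_mid (mat2 p q r s) * g) $$ (2,0) = r * g$$(Suc 0,0) + s * g$$(2,0)"
  "(embed_mid (mat2 p q r s) * g) $$ (3,0) = g$$(3,0)"
  "dim_row (embed_mid (mat2 p q r s) * g) = 4" "dim_col (embed_mid (mat2 p q r s) * g) = 4"
  using assms by simp_all

lemma wq_col0: assumes "dim_row g = 4" "dim_col g = 4" shows
  "(wq * g) $$ (0,0) = g$$(Suc 0,0)"
  "(wq * g) $$ (Suc 0,0) = g$$(0,0)"
  "(wq * g) $$ (2,0) = g$$(3,0)"
  "(wq * g) $$ (3,0) = g$$(2,0)"
  "dim_row (wq * g) = 4" "dim_col (wq * g) = 4"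
  using assms by simp_all

lemma blk_col0: assumes "dim_row g = 4" "dim_col g = 4" shows
  "(blk (mat2 a b c d) (mat2 e f x y) * g) $$ (0,0) = a * g$$(0,0) + b * g$$(Suc 0,0)"
  "(blk (mat2 a b c d) (mat2 e f x y) * g) $$ (Suc 0,0) = c * g$$(0,0) + d * g$$(Suc 0,0)"
  "(blk (mat2 a b c d) (mat2 e f x y) * g) $$ (2,0) = e * g$$(2,0) + f * g$$(3,0)"
  "(blk (mat2 a b c d) (mat2 e f x y) * g) $$ (3,0) = x * g$$(2,0) + y * g$$(3,0)"
  "dim_row (blk (mat2 a b c d) (mat2 e f x y) * g) = 4" "dim_col (blk (mat2 a b c d) (mat2 e f x y) * g) = 4"
  using assms by simp_all

context dv begin

lemma stageB: assumes g: "g \<in> Sp4_O v"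
  and e: "g$$(0,0) = 1" "g$$(Suc 0,0) = 0" "g$$(2,0) = 0" "g$$(3,0) = 0"
  shows "g \<in> Wr 8"
proof -
  note G = Sp4D[OF g]
  have o01: "om g 0 1 = 0" and o02: "om g 0 2 = 0" and o12: "om g 1 2 = 1"
    using G(5)[of 0 1] G(5)[of 0 2] G(5)[of 1 2] by simp_all
  have r31: "g$$(3,Suc 0) = 0" using o01 e by (simp add: om_def)
  have r32: "g$$(3,2) = 0" using o02 e by (simp add: om_def)
  have det: "g$$(Suc 0,Suc 0) * g$$(2,2) - g$$(2,Suc 0) * g$$(Suc 0,2) = 1" using o12 e r31 r32 by (simp add: om_def)
  define k where "k = embed_mid (mat2 (g$$(2,2)) (- g$$(Suc 0,2)) (- g$$(2,Suc 0)) (g$$(Suc 0,Suc 0)))"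
  have kK: "k \<in> K2 v" unfolding k_def
    by (rule K2I) (use det G(4) in \<open>simp add: K2P_def algebra_simps\<close>)
  have hS: "k * g \<in> Sp4_O v" by (rule Sp4_mult[OF K2_Sp4[OF kK] g])
  have "k * g \<in> Wr 7"
  proof (rule stageA[OF hS])
    show "(k * g) $$ (0,0) = 1" "(k * g) $$ (Suc 0,0) = 0" "(k * g) $$ (2,0) = 0" "(k * g) $$ (3,0) = 0"
      "(k * g) $$ (Suc 0,Suc 0) = 1" "(k * g) $$ (Suc 0,2) = 0" "(k * g) $$ (2,Suc 0) = 0" "(k * g) $$ (2,2) = 1"
      unfolding k_def using G(2,3) e det by (simp_all add: algebra_simps)
  qed
  then show ?thesis using peel[of k g 7] kK G(1) by simp
qed

lemma pair_red: assumes "x \<in> Ov" "y \<in> Ov" obtains p q r s where "K2P p q r s" "r * x + s * y = 0"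
proof (cases "x = 0")
  case True
  have "K2P 0 1 (-1) 0" by (simp add: K2P_def)
  then show ?thesis using that True by fastforce
next
  case False
  show ?thesis
  proof (cases "y = 0 \<or> v x \<le> v y")
    case True
    then have "y / x \<in> Ov" using O_div[OF assms(2) False] by auto
    then have "K2P 1 0 (- (y/x)) 1" by (simp add: K2P_def)
    moreover have "- (y/x) * x + 1 * y = 0" using False by simp
    ultimately show ?thesis using that by blast
  next
    case F2: False
    then have "x / y \<in> Ov" using O_div[OF assms(1)] by auto
    then have "K2P 0 1 (-1) (x/y)" by (simp add: K2P_def)
    moreover have "(-1) * x + (x/y) * y = 0" using F2 by simp
    ultimately show ?thesis using that by blast
  qed
qed

lemma unit_col: assumes g: "g \<in> Sp4_O v"
  shows "g$$(0,0) \<notin> Pv \<or> g$$(Suc 0,0) \<notin> Pv \<or> g$$(2,0) \<notin> Pv \<or> g$$(3,0) \<notin> Pv"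
proof (rule ccontr)
  assume "\<not> ?thesis"
  then have P: "g$$(0,0) \<in> Pv" "g$$(Suc 0,0) \<in> Pv" "g$$(2,0) \<in> Pv" "g$$(3,0) \<in> Pv" by auto
  note G = Sp4D[OF g]
  have o03: "om g 0 3 = 1" using G(5)[of 0 3] by simp
  have "om g 0 3 \<in> Pv" unfolding om_def
    by (intro P_diff P_add P_mult2 P G(4)) (simp_all add: P)
  then show False using o03 one_notin_P by simp
qed

lemma unit_map: assumes "x \<in> Ov" "y \<in> Ov" "x \<notin> Pv \<or> y \<notin> Pv"
  obtains a b c d p q r s where "K1P a b c d p q r s" "a * x + b * y = 1" "c * x + d * y = 0"
proof (cases "x \<notin> Pv")
  case True
  have u: "1 / x \<in> Ov" "x \<noteq> 0" using unit_div[OF assms(1) True O_1] by auto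
  have u2: "y / x \<in> Ov" using unit_div[OF assms(1) True assms(2)] by auto
  have "K1P (1/x) 0 (-(y/x)) 1 x 0 y 1" unfolding K1P_def using u u2 assms by (simp add: field_simps)
  moreover have "(1/x) * x + 0 * y = 1" "(-(y/x)) * x + 1 * y = 0" using u by simp_all
  ultimately show ?thesis using that by blast
next
  case False
  then have F: "y \<notin> Pv" using assms(3) by blast
  have u: "1 / y \<in> Ov" "y \<noteq> 0" using unit_div[OF assms(2) F O_1] by auto
  have u2: "x / y \<in> Ov" using unit_div[OF assms(2) F assms(1)] by auto
  have "K1P 0 (1/y) 1 (-(x/y)) x 1 y 0" unfolding K1P_def using u u2 assms by (simp add: field_simps)
  moreover have "0 * x + (1/y) * y = 1" "1 * x + (-(x/y)) * y = 0" using u by simp_all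
  ultimately show ?thesis using that by blast
qed

lemma stageC: assumes g: "g \<in> Sp4_O v" shows "g \<in> Wr 12"
proof -
  note G = Sp4D[OF g]
  have gO: "g$$(Suc 0,0) \<in> Ov" "g$$(2,0) \<in> Ov" by (simp_all add: G(4))
  obtain p q r s where P1: "K2P p q r s" and z1: "r * g$$(Suc 0,0) + s * g$$(2,0) = 0"
    using pair_red[OF gO] by blast
  define k1 where "k1 = embed_mid (mat2 p q r s)"
  have k1K: "k1 \<in> K2 v" unfolding k1_def by (rule K2I[OF P1])
  define g1 where "g1 = k1 * g"
  have g1S: "g1 \<in> Sp4_O v" unfolding g1_def by (rule Sp4_mult[OF K2_Sp4[OF k1K] g])
  note G1 = Sp4D[OF g1S]
  have g1e: "g1$$(2,0) = 0" "g1$$(3,0) = g$$(3,0)" "g1$$(0,0) = g$$(0,0)"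
    unfolding g1_def k1_def mid_col0[OF G(2,3)] using z1 by simp_all
  have wK: "wq \<in> K1 v" by (rule wq_K1)
  define g2 where "g2 = wq * g1"
  have g2S: "g2 \<in> Sp4_O v" unfolding g2_def by (rule Sp4_mult[OF K1_Sp4[OF wK] g1S])
  note G2 = Sp4D[OF g2S]
  have g2e: "g2$$(3,0) = 0" unfolding g2_def wq_col0[OF G1(2,3)] by (rule g1e(1))
  have g2O: "g2$$(Suc 0,0) \<in> Ov" "g2$$(2,0) \<in> Ov" by (simp_all add: G2(4))
  obtain p' q' r' s' where P3: "K2P p' q' r' s'" and z3: "r' * g2$$(Suc 0,0) + s' * g2$$(2,0) = 0"
    using pair_red[OF g2O] by blast
  define k3 where "k3 = embed_mid (mat2 p' q' r' s')"
  have k3K: "k3 \<in> K2 v" unfolding k3_def by (rule K2I[OF P3])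
  define g3 where "g3 = k3 * g2"
  have g3S: "g3 \<in> Sp4_O v" unfolding g3_def by (rule Sp4_mult[OF K2_Sp4[OF k3K] g2S])
  note G3 = Sp4D[OF g3S]
  have g3e: "g3$$(2,0) = 0" "g3$$(3,0) = 0"
    unfolding g3_def k3_def mid_col0[OF G2(2,3)] using z3 g2e by simp_all
  have un: "g3$$(0,0) \<notin> Pv \<or> g3$$(Suc 0,0) \<notin> Pv"
    using unit_col[OF g3S] g3e by (auto simp: P_iff)
  have g3O: "g3$$(0,0) \<in> Ov" "g3$$(Suc 0,0) \<in> Ov" by (simp_all add: G3(4))
  obtain a b c d p'' q'' r'' s'' where P4: "K1P a b c d p'' q'' r'' s''"
    and u: "a * g3$$(0,0) + b * g3$$(Suc 0,0) = 1" "c * g3$$(0,0) + d * g3$$(Suc 0,0) = 0"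
    using unit_map[OF g3O un] by blast
  define k4 where "k4 = blk (mat2 a b c d) (mat2 s'' q'' r'' p'')"
  have k4K: "k4 \<in> K1 v" unfolding k4_def by (rule K1I[OF P4])
  define g4 where "g4 = k4 * g3"
  have g4S: "g4 \<in> Sp4_O v" unfolding g4_def by (rule Sp4_mult[OF K1_Sp4[OF k4K] g3S])
  have "g4 \<in> Wr 8"
  proof (rule stageB[OF g4S])
    show "g4$$(0,0) = 1" "g4$$(Suc 0,0) = 0" "g4$$(2,0) = 0" "g4$$(3,0) = 0"
      unfolding g4_def k4_def blk_col0[OF G3(2,3)] using u g3e by simp_all
  qed
  then have "g3 \<in> Wr 9" unfolding g4_def using peel[of k4 g3 8] k4K G3(1) by simp
  then have "g2 \<in> Wr 10" unfolding g3_def using peel[of k3 g2 9] k3K G2(1) by simp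
  then have "g1 \<in> Wr 11" unfolding g2_def using peel[of wq g1 10] wK G1(1) by simp
  then show "g \<in> Wr 12" unfolding g1_def using peel[of k1 g 11] k1K G(1) by simp
qed

end

context dv begin
lemma foldr_Sp4: "(\<forall>k\<in>set ks. k \<in> Sp4_O v) \<Longrightarrow> foldr (*) ks (1\<^sub>m 4) \<in> Sp4_O v"
  by (induction ks) (simp_all add: one_Sp4 Sp4_mult)
end

theorem lemma3p9:
  fixes v :: "'a::field \<Rightarrow> int"
  assumes "nonarch_local_field v"
  shows "g \<in> Sp4_O v \<longleftrightarrow>
           (\<exists>ks :: 'a mat list. length ks = 60 \<and>
              (\<forall>i<60. (even i \<longrightarrow> ks ! i \<in> K1 v) \<and> (odd i \<longrightarrow> ks ! i \<in> K2 v)) \<and>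
              g = foldr (*) ks (1\<^sub>m 4))"
proof -
  interpret dv v
    by unfold_locales (use assms in \<open>simp add: nonarch_local_field_def\<close>)
  show ?thesis
  proof
    assume "g \<in> Sp4_O v"
    then have "g \<in> Wr 12" by (rule stageC)
    then have "g \<in> Wr 30" by (rule Wr_mono) simp
    then have "\<exists>ks. length ks = 2 * 30 \<and>
      (\<forall>i<2*30. (even i \<longrightarrow> ks ! i \<in> K1 v) \<and> (odd i \<longrightarrow> ks ! i \<in> K2 v)) \<and> g = foldr (*) ks (1\<^sub>m 4)"
      by (rule Wr_list)
    then show "\<exists>ks :: 'a mat list. length ks = 60 \<and>
              (\<forall>i<60. (even i \<longrightarrow> ks ! i \<in> K1 v) \<and> (odd i \<longrightarrow> ks ! i \<in> K2 v)) \<and>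
              g = foldr (*) ks (1\<^sub>m 4)" by simp
  next
    assume "\<exists>ks :: 'a mat list. length ks = 60 \<and>
              (\<forall>i<60. (even i \<longrightarrow> ks ! i \<in> K1 v) \<and> (odd i \<longrightarrow> ks ! i \<in> K2 v)) \<and>
              g = foldr (*) ks (1\<^sub>m 4)"
    then obtain ks :: "'a mat list" where l: "length ks = 60"
      and P: "\<forall>i<60. (even i \<longrightarrow> ks ! i \<in> K1 v) \<and> (odd i \<longrightarrow> ks ! i \<in> K2 v)"
      and g: "g = foldr (*) ks (1\<^sub>m 4)" by blast
    have "\<forall>k\<in>set ks. k \<in> Sp4_O v"
    proof
      fix k assume "k \<in> set ks"
      then obtain i where i: "i < length ks" "ks ! i = k" by (auto simp: in_set_conv_nth)
      then have "k \<in> K1 v \<or> k \<in> K2 v" using P l by (cases "even i") auto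
      then show "k \<in> Sp4_O v" using K1_Sp4 K2_Sp4 by blast
    qed
    then show "g \<in> Sp4_O v" unfolding g by (rule foldr_Sp4)
  qed
qed

end
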